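(* Let $n\ge3$ and let $q_1,\dots,q_n\ge2$ be integers such that $\prod_{k=1}^n\big(1+\frac{1}{q_k}\big)\ge n\log n$ (natural logarithm). Then $Q=[q_1]\times\cdots\times[q_n]$ can be covered by hyperplanes, each with a non-empty set of fixed coordinates, no two of which are parallel.
   Context: $[m]=\{1,\dots,m\}$. A hyperplane in $Q=S_1\times\cdots\times S_n$ is $A=A_1\times\cdots\times A_n$ with each $A_k$ either $S_k$ or a singleton in $S_k$; $F(A)=\{k:A_k\text{ is a singleton}\}$ is its set of fixed coordinates; two hyperplanes are parallel if they have the same set of fixed coordinates. *)

theory Defs
  imports "HOL-Analysis.Analysis"
begin

definition grid :: "nat \<Rightarrow> (nat \<Rightarrow> nat) \<Rightarrow> (nat \<Rightarrow> nat) set" where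
  "grid n q = PiE {1..n} (\<lambda>k. {1..q k})"

definition is_hyperplane_factors :: "nat \<Rightarrow> (nat \<Rightarrow> nat) \<Rightarrow> (nat \<Rightarrow> nat set) \<Rightarrow> bool" where
  "is_hyperplane_factors n q A \<longleftrightarrow> A \<in> extensional {1..n} \<and>
     (\<forall>k\<in>{1..n}. A k = {1..q k} \<or> (\<exists>s\<in>{1..q k}. A k = {s}))"

definition hyperplane_set :: "nat \<Rightarrow> (nat \<Rightarrow> nat set) \<Rightarrow> (nat \<Rightarrow> nat) set" where
  "hyperplane_set n A = PiE {1..n} A"

definition fixed_coords :: "nat \<Rightarrow> (nat \<Rightarrow> nat set) \<Rightarrow> nat set" where
  "fixed_coords n A = {k\<in>{1..n}. \<exists>s. A k = {s}}"

end

theory Submission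
  imports Defs
begin


lemma expb: "0 \<le> x \<Longrightarrow> x \<le> 1 \<Longrightarrow> exp (x::real) \<le> 1 + x + x^2" by (rule exp_bound)

lemma exp_1_2_plus: "exp (1 + x) \<le> 272/100 * (1 + x + x^2)" if "0 \<le> x" "x \<le> 1" for x :: real
proof -
  have "exp (1+x) = exp 1 * exp x" by (simp add: exp_add)
  also have "\<dots> \<le> 272/100 * (1 + x + x^2)"
    using e_less_272 exp_bound[OF that] by (intro mult_mono) auto
  finally show ?thesis .
qed

lemma num1: "exp (6/5::real) \<le> 7/2"
  using exp_1_2_plus[of "1/5"] by (simp add: power2_eq_square)
lemma num2: "exp (9/5::real) \<le> 7"
proof -
  have "exp (9/5::real) = exp 1 * exp (2/5) * exp (2/5)" by (simp flip: exp_add)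
  also have "\<dots> \<le> 272/100 * (1 + 2/5 + (2/5)^2) * (1 + 2/5 + (2/5)^2)"
    using e_less_272 exp_bound[of "2/5::real"] by (intro mult_mono) auto
  finally show ?thesis by (simp add: power2_eq_square)
qed
lemma num3: "exp (29/20::real) \<le> 9/2"
  using exp_1_2_plus[of "9/20"] by (simp add: power2_eq_square)
lemma num4: "exp (7/5::real) \<le> 5"
  using exp_1_2_plus[of "2/5"] by (simp add: power2_eq_square)
lemma num5: "exp (17/10::real) \<le> 6"
proof -
  have "exp (17/10::real) = exp 1 * exp (7/20) * exp (7/20)" by (simp flip: exp_add)
  also have "\<dots> \<le> 272/100 * (1 + 7/20 + (7/20)^2) * (1 + 7/20 + (7/20)^2)"
    using e_less_272 exp_bound[of "7/20::real"] by (intro mult_mono) auto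
  finally show ?thesis by (simp add: power2_eq_square)
qed
lemma num6: "exp (3/4::real) > 2"
  using exp_lower_Taylor_quadratic[of "3/4::real"] by (simp add: power2_eq_square)

lemma ln_ge_of_exp: "exp a \<le> (x::real) \<Longrightarrow> a \<le> ln x"
proof -
  assume h: "exp a \<le> x"
  have "x > 0" using h exp_gt_zero[of a] by linarith
  have "ln (exp a) \<le> ln x" using h \<open>x > 0\<close> by (subst ln_le_cancel_iff) auto
  then show ?thesis by simp
qed
lemma ln2: "ln (2::real) < 3/4"
proof -
  have "ln (2::real) < ln (exp (3/4))" using num6 by (subst ln_less_cancel_iff) auto
  then show ?thesis by simp
qed
lemma ln35: "ln (7/2::real) \<ge> 6/5" using num1 by (rule ln_ge_of_exp)
lemma ln7: "ln (7::real) \<ge> 9/5" using num2 by (rule ln_ge_of_exp)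
lemma ln5: "ln (5::real) \<ge> 7/5" using num4 by (rule ln_ge_of_exp)
lemma ln6: "ln (6::real) \<ge> 17/10" using num5 by (rule ln_ge_of_exp)
lemma ln4: "ln (4::real) \<ge> 6/5" using num1 by (intro ln_ge_of_exp) simp
lemma ln3: "ln (3::real) > 1" proof -
  have "ln (exp 1) < ln (3::real)" using e_less_272 by (subst ln_less_cancel_iff) auto
  then show ?thesis by simp
qed
lemma ln_big: "P \<ge> 9/2 \<Longrightarrow> ln (P::real) \<ge> 29/20" using num3 by (intro ln_ge_of_exp) simp

lemma pos1: "0 < 1 + 1/real (k::nat)" by (intro add_pos_nonneg) auto

lemma nz1: "1 + 1/real (k::nat) \<noteq> 0" using pos1[of k] by linarith

lemma chord:
  fixes x N :: real assumes "2 \<le> x" "x \<le> N" "3 \<le> N"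
  shows "ln x \<le> ln N - (ln N - ln 2)/(1/2 - 1/N) * (1/x - 1/N)"
proof -
  have cc: "concave_on {1/N..1/2} ln"
    unfolding concave_on_def
    by (rule convex_on_subset[OF ln_concave[unfolded concave_on_def]]) (use assms in \<open>auto intro: order.strict_trans2[of 0 "1/N"]\<close>)
  have "1/x \<in> {1/N..1/2}" using assms by (auto simp: field_simps)
  from concave_onD_Icc'[OF cc this]
  have "ln (1/x) \<ge> (ln(1/2) - ln(1/N))/(1/2 - 1/N) * (1/x - 1/N) + ln (1/N)" by simp
  then show ?thesis using assms by (simp add: ln_div)
qed

lemma big_case:
  fixes n :: nat and q :: "nat \<Rightarrow> nat"
  assumes n: "7 \<le> n" and q: "\<forall>k\<in>{1..n}. 2 \<le> q k"
    and P: "real n * ln (real n) \<le> (\<Prod>k=1..n. 1 + 1/real (q k))"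
  defines "T \<equiv> {k\<in>{1..n}. q k \<le> n}"
  shows "(\<Sum>k\<in>T. ln (real (q k))) < (\<Prod>k\<in>T. 1 + 1/real (q k)) - 1"
proof -
  define m where "m = card T"
  define PT where "PT = (\<Prod>k\<in>T. 1 + 1/real (q k))"
  define R where "R = (\<Prod>k\<in>{1..n}-T. 1 + 1/real (q k))"
  define c where "c = (ln n - ln 2)/(1/2 - 1/real n)"
  define s where "s = (\<Sum>k\<in>T. 1/real (q k))"
  have Tsub: "T \<subseteq> {1..n}" and finT: "finite T" unfolding T_def by auto
  have mn: "m \<le> n" unfolding m_def using card_mono[OF _ Tsub] by simp
  have cardR: "card ({1..n}-T) = n - m" unfolding m_def using Tsub finT
    by (simp add: card_Diff_subset)
  have PR: "(\<Prod>k=1..n. 1 + 1/real (q k)) = PT * R"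
    unfolding PT_def R_def using prod.subset_diff[OF Tsub] by (simp add: mult.commute)
  have PTpos: "PT > 0" unfolding PT_def by (intro prod_pos) (auto intro: pos1)
  have Rpos: "R > 0" unfolding R_def by (intro prod_pos) (auto intro: pos1)
  have "R \<le> (\<Prod>k\<in>{1..n}-T. exp (1/real (n+1)))"
    unfolding R_def
  proof (intro prod_mono conjI)
    fix k assume k: "k \<in> {1..n}-T"
    then have "q k \<ge> n+1" unfolding T_def by auto
    then have "1/real (q k) \<le> 1/real (n+1)" by (intro divide_left_mono) auto
    then show "1 + 1/real (q k) \<le> exp (1/real (n+1))"
      using exp_ge_add_one_self[of "1/real (n+1)"] by linarith
    show "0 \<le> 1 + 1/real (q k)" by simp
  qed
  also have "\<dots> = exp (real (n-m)/real (n+1))"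
    using cardR by (simp add: exp_of_nat_mult[symmetric])
  finally have R_le: "R \<le> exp (real (n-m)/real (n+1))" .
  have Rm: "R * real m \<le> real n"
  proof -
    have "exp (- (real (n-m)/real (n+1))) \<ge> 1 - real (n-m)/real (n+1)"
      using exp_ge_add_one_self[of "- (real (n-m)/real (n+1))"] by simp
    then have "R * (1 - real (n-m)/real (n+1)) \<le> R * exp (- (real (n-m)/real (n+1)))"
      using Rpos by simp
    also have "\<dots> \<le> 1" using R_le by (simp add: exp_minus field_simps)
    finally have "R * (real (n+1) - real (n-m)) \<le> real (n+1)"
      by (simp add: field_simps)
    moreover have "real (n+1) - real (n-m) = real m + 1" using mn by simp
    ultimately have "R * (real m + 1) \<le> real n + 1" by (simp add: ac_simps)
    moreover have "R \<ge> 1" unfolding R_def by (intro prod_ge_1) auto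
    ultimately show ?thesis by (simp add: algebra_simps)
  qed
  have lnn: "ln (real n) \<ge> 9/5" proof -
    have "ln (7::real) \<le> ln (real n)" using n by (subst ln_le_cancel_iff) auto
    then show ?thesis using ln7 by linarith
  qed
  have A: "PT \<ge> real m * ln n"
  proof -
    have "real m * (real n * ln n) \<le> real m * (PT * R)" using P PR by (intro mult_left_mono) auto
    also have "\<dots> = PT * (R * real m)" by simp
    also have "\<dots> \<le> PT * real n" using Rm PTpos by (intro mult_left_mono) auto
    finally show ?thesis using n by (simp add: algebra_simps)
  qed
  have "R \<le> exp 1" proof -
    have "real (n-m)/real (n+1) \<le> 1" by (simp add: field_simps)
    then show ?thesis using R_le by (meson exp_le_cancel_iff order.trans)
  qed
  then have "R < 272/100" using e_less_272 by linarith
  then have "PT * (272/100) \<ge> real n * ln n" using P PR PTpos by (smt (verit) mult_left_mono)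
  moreover have "real n * ln n \<ge> 7 * (9/5)" using n lnn by (intro mult_mono) auto
  ultimately have "PT \<ge> 9/2" by linarith
  then have lnPT: "ln PT \<ge> 29/20" by (rule ln_big)
  have lnPT_s: "ln PT \<le> s"
  proof -
    have "ln PT = (\<Sum>k\<in>T. ln (1 + 1/real (q k)))" unfolding PT_def
      by (subst ln_prod) (auto simp: pos1 finT nz1)
    also have "\<dots> \<le> s" unfolding s_def by (intro sum_mono ln_add_one_self_le_self) auto
    finally show ?thesis .
  qed
  have c_ge: "c \<ge> 12/5"
  proof -
    have "ln (real n) - ln 2 = ln (real n / 2)" using n by (simp add: ln_div)
    also have "\<dots> \<ge> ln (7/2)" using n by (subst ln_le_cancel_iff) auto
    finally have "ln (real n) - ln 2 \<ge> 6/5" using ln35 by linarith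
    moreover have Dpos: "0 < 1/2 - 1/real n" and Dle: "1/2 - 1/real n \<le> 1/2" using n by (auto simp: field_simps)
    moreover have "12/5 * (1/2 - 1/real n) \<le> 12/5 * (1/2)" using Dle by (rule mult_left_mono) simp
    ultimately have h: "12/5 * (1/2 - 1/real n) \<le> ln (real n) - ln 2" by linarith
    show ?thesis unfolding c_def using h pos_le_divide_eq[OF Dpos] by blast
  qed
  have "(\<Sum>k\<in>T. ln (real (q k))) \<le> (\<Sum>k\<in>T. ln n - c * (1/real (q k) - 1/n))"
    unfolding c_def
  proof (intro sum_mono chord)
    fix k assume "k \<in> T" then show "2 \<le> real (q k)" "real (q k) \<le> real n"
      using q unfolding T_def by auto
    show "3 \<le> real n" using n by simp
  qed
  also have "\<dots> = real m * ln n - c * s + c * real m / real n"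
    unfolding s_def m_def by (simp add: sum_subtractf sum_distrib_left sum_divide_distrib algebra_simps)
  also have "\<dots> \<le> PT - c * ln PT + c"
  proof -
    have "c * real m / real n \<le> c" using mn n c_ge by (simp add: divide_le_eq mult_left_mono)
    moreover have "c * ln PT \<le> c * s" using lnPT_s c_ge by (intro mult_left_mono) auto
    ultimately show ?thesis using A by linarith
  qed
  also have "\<dots> < PT - 1"
  proof -
    have "c * (ln PT - 1) \<ge> 12/5 * (9/20)" using c_ge lnPT by (intro mult_mono) auto
    then show ?thesis by (simp add: algebra_simps)
  qed
  finally show ?thesis unfolding PT_def .
qed


lemma small_case:
  fixes n :: nat and q :: "nat \<Rightarrow> nat"
  assumes n: "3 \<le> n" "n \<le> 6" and q: "\<forall>k\<in>{1..n}. 2 \<le> q k"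
    and P: "real n * ln (real n) \<le> (\<Prod>k=1..n. 1 + 1/real (q k))"
  shows "(\<Sum>k\<in>{1..n}. ln (real (q k))) < (\<Prod>k\<in>{1..n}. 1 + 1/real (q k)) - 1"
proof -
  have all2: "\<forall>k\<in>{1..n}. q k = 2"
  proof (rule ccontr)
    assume "\<not> (\<forall>k\<in>{1..n}. q k = 2)"
    then obtain j where j: "j \<in> {1..n}" "q j \<noteq> 2" by blast
    then have "q j \<ge> 3" using q by force
    then have f1: "1 + 1/real (q j) \<le> 4/3" by (simp add: field_simps)
    have f2: "(\<Prod>k\<in>{1..n}-{j}. 1 + 1/real (q k)) \<le> (3/2)^(n-1)"
    proof (rule prod_le_power)
      fix i assume "i \<in> {1..n}-{j}"
      then have "q i \<ge> 2" using q by auto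
      then show "0 \<le> 1 + 1/real (q i) \<and> 1 + 1/real (q i) \<le> 3/2"
        by (auto simp: field_simps)
    qed (use j in auto)
    have "(\<Prod>k=1..n. 1 + 1/real (q k)) = (1 + 1/real (q j)) * (\<Prod>k\<in>{1..n}-{j}. 1 + 1/real (q k))"
      using j by (intro prod.remove) auto
    also have "\<dots> \<le> 4/3 * (3/2)^(n-1)"
      using f1 f2 by (intro mult_mono) (auto intro: prod_nonneg simp: add_nonneg_nonneg)
    finally have "real n * ln (real n) \<le> 4/3 * (3/2)^(n-1)" using P by linarith
    moreover have "n = 3 \<or> n = 4 \<or> n = 5 \<or> n = 6" using n by auto
    ultimately show False using ln3 ln4 ln5 ln6 by (auto simp: eval_nat_numeral)
  qed
  have "(\<Sum>k\<in>{1..n}. ln (real (q k))) = real n * ln 2" using all2 by simp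
  moreover have "(\<Prod>k\<in>{1..n}. 1 + 1/real (q k)) = (3/2)^n" using all2 by simp
  moreover have "n = 3 \<or> n = 4 \<or> n = 5 \<or> n = 6" using n by auto
  ultimately show ?thesis using ln2 by (auto simp: eval_nat_numeral)
qed

lemma numeric:
  fixes n :: nat and q :: "nat \<Rightarrow> nat"
  assumes n: "3 \<le> n" and q: "\<forall>k\<in>{1..n}. 2 \<le> q k"
    and P: "real n * ln (real n) \<le> (\<Prod>k=1..n. 1 + 1/real (q k))"
  shows "\<exists>T\<subseteq>{1..n}. (\<Sum>k\<in>T. ln (real (q k))) < (\<Prod>k\<in>T. 1 + 1/real (q k)) - 1"
proof (cases "n \<le> 6")
  case True then show ?thesis using small_case[OF n True q P] by blast
next
  case False
  then have "7 \<le> n" by simp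
  from big_case[OF this q P] show ?thesis by (intro exI[of _ "{k\<in>{1..n}. q k \<le> n}"]) auto
qed



lemma card_Icc1: "card {1..(m::nat)} = m" by simp

lemma pigeon:
  fixes q :: "nat \<Rightarrow> nat"
  assumes finT: "finite T" and ST: "S \<subseteq> T" and U: "U \<subseteq> PiE T (\<lambda>k. {1..q k})"
    and q1: "\<forall>k\<in>S. q k \<ge> 1"
  shows "\<exists>b\<in>PiE S (\<lambda>k. {1..q k}). real (card U) \<le> real (card {x\<in>U. \<forall>k\<in>S. x k = b k}) * real (\<Prod>k\<in>S. q k)"
proof -
  define B where "B = PiE S (\<lambda>k. {1..q k})"
  have finS: "finite S" using finT ST finite_subset by blast
  have finB: "finite B" unfolding B_def using finS by (intro finite_PiE) auto
  have cardB: "card B = (\<Prod>k\<in>S. q k)" unfolding B_def using finS by (simp add: card_PiE)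
  have Bne: "B \<noteq> {}" unfolding B_def using q1 by (auto simp: PiE_eq_empty_iff)
  have finU: "finite U" using U finT by (meson finite_PiE finite_atLeastAtMost finite_subset)
  have img: "(\<lambda>x. restrict x S) ` U \<subseteq> B" unfolding B_def
  proof (rule image_subsetI)
    fix x assume "x \<in> U"
    then have "x \<in> PiE T (\<lambda>k. {1..q k})" using U by auto
    then have "\<forall>k\<in>S. x k \<in> {1..q k}" using ST by (auto simp: PiE_iff)
    then show "restrict x S \<in> PiE S (\<lambda>k. {1..q k})" by auto
  qed
  have fib: "{x\<in>U. restrict x S = b} = {x\<in>U. \<forall>k\<in>S. x k = b k}" if "b \<in> B" for b
  proof -
    have "b \<in> extensional S" using that unfolding B_def by (simp add: PiE_iff)
    then show ?thesis by (auto simp: fun_eq_iff restrict_def extensional_def)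
  qed
  have sumU: "(\<Sum>b\<in>B. card {x\<in>U. restrict x S = b}) = card U"
    using sum.group[OF finU finB img, of "\<lambda>_. 1::nat"] by simp
  have "\<exists>b\<in>B. card U \<le> card {x\<in>U. restrict x S = b} * card B"
  proof (rule ccontr)
    assume "\<not> ?thesis"
    then have lt: "\<forall>b\<in>B. card {x\<in>U. restrict x S = b} * card B < card U" by auto
    have "(\<Sum>b\<in>B. card {x\<in>U. restrict x S = b} * card B) < (\<Sum>b\<in>B. card U)"
      using lt finB Bne by (intro sum_strict_mono) auto
    also have "\<dots> = card B * card U" by simp
    also have "(\<Sum>b\<in>B. card {x\<in>U. restrict x S = b} * card B) = card B * card U"
      using sumU by (simp add: sum_distrib_right[symmetric])
    finally show False by simp
  qed
  then obtain b where b: "b \<in> B" "card U \<le> card {x\<in>U. restrict x S = b} * card B" by blast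
  then have "real (card U) \<le> real (card {x\<in>U. \<forall>k\<in>S. x k = b k}) * real (\<Prod>k\<in>S. q k)"
    using fib[OF b(1)] cardB by (metis of_nat_le_iff of_nat_mult)
  then show ?thesis using b(1) unfolding B_def by blast
qed

lemma greedy:
  fixes q :: "nat \<Rightarrow> nat"
  assumes finT: "finite T" and q1: "\<forall>k\<in>T. q k \<ge> 1" and finF: "finite F" and FT: "F \<subseteq> Pow T"
  shows "\<exists>a. (\<forall>S\<in>F. a S \<in> PiE S (\<lambda>k. {1..q k})) \<and>
     real (card {x\<in>PiE T (\<lambda>k. {1..q k}). \<forall>S\<in>F. \<not>(\<forall>k\<in>S. x k = a S k)})
       \<le> real (card (PiE T (\<lambda>k. {1..q k}))) * (\<Prod>S\<in>F. 1 - 1/real (\<Prod>k\<in>S. q k))"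
  using finF FT
proof (induction F rule: finite_induct)
  case empty
  then show ?case by simp
next
  case (insert S F)
  define G where "G = PiE T (\<lambda>k. {1..q k})"
  from insert obtain a where a: "\<forall>S\<in>F. a S \<in> PiE S (\<lambda>k. {1..q k})"
    and bnd: "real (card {x\<in>G. \<forall>S\<in>F. \<not>(\<forall>k\<in>S. x k = a S k)})
       \<le> real (card G) * (\<Prod>S\<in>F. 1 - 1/real (\<Prod>k\<in>S. q k))"
    unfolding G_def by auto
  define U where "U = {x\<in>G. \<forall>S\<in>F. \<not>(\<forall>k\<in>S. x k = a S k)}"
  have ST: "S \<subseteq> T" using insert by auto
  have finG: "finite G" unfolding G_def using finT by (intro finite_PiE) auto
  have UG: "U \<subseteq> PiE T (\<lambda>k. {1..q k})" unfolding U_def G_def by auto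
  obtain b where b: "b \<in> PiE S (\<lambda>k. {1..q k})"
    and bb: "real (card U) \<le> real (card {x\<in>U. \<forall>k\<in>S. x k = b k}) * real (\<Prod>k\<in>S. q k)"
    using pigeon[OF finT ST UG] q1 ST by auto
  define a' where "a' = a(S := b)"
  define M where "M = {x\<in>U. \<forall>k\<in>S. x k = b k}"
  have U'eq: "{x\<in>G. \<forall>S'\<in>insert S F. \<not>(\<forall>k\<in>S'. x k = a' S' k)} = U - M"
    unfolding U_def M_def a'_def using insert.hyps(2) by auto
  have finU: "finite U" unfolding U_def using finG by simp
  have MU: "M \<subseteq> U" unfolding M_def by auto
  have qSpos: "real (\<Prod>k\<in>S. q k) \<ge> 1"
  proof -
    have "(\<Prod>k\<in>S. q k) \<ge> 1" using q1 ST by (intro prod_ge_1) auto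
    then show ?thesis by (metis of_nat_1 of_nat_le_iff)
  qed
  have "real (card (U - M)) = real (card U) - real (card M)"
    using card_Diff_subset[OF finite_subset[OF MU finU] MU] card_mono[OF finU MU] by simp
  also have "\<dots> \<le> real (card U) * (1 - 1/real (\<Prod>k\<in>S. q k))"
  proof -
    have "real (card U) / real (\<Prod>k\<in>S. q k) \<le> real (card M)"
      using bb qSpos unfolding M_def by (simp add: divide_le_eq)
    then show ?thesis by (simp add: algebra_simps)
  qed
  also have "\<dots> \<le> real (card G) * (\<Prod>S\<in>F. 1 - 1/real (\<Prod>k\<in>S. q k)) * (1 - 1/real (\<Prod>k\<in>S. q k))"
    using bnd qSpos unfolding U_def by (intro mult_right_mono) (auto simp: field_simps)
  also have "\<dots> = real (card G) * (\<Prod>S'\<in>insert S F. 1 - 1/real (\<Prod>k\<in>S'. q k))"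
    using insert.hyps by simp
  finally have "real (card {x\<in>G. \<forall>S'\<in>insert S F. \<not>(\<forall>k\<in>S'. x k = a' S' k)})
     \<le> real (card G) * (\<Prod>S'\<in>insert S F. 1 - 1/real (\<Prod>k\<in>S'. q k))" using U'eq by simp
  moreover have "\<forall>S'\<in>insert S F. a' S' \<in> PiE S' (\<lambda>k. {1..q k})"
    using a b insert.hyps(2) unfolding a'_def by auto
  ultimately show ?case unfolding G_def by blast
qed



lemma powset_sum:
  fixes q :: "nat \<Rightarrow> nat"
  assumes fin: "finite T"
  shows "(\<Sum>X\<in>Pow T. 1/real (\<Prod>k\<in>X. q k)) = (\<Prod>k\<in>T. 1 + 1/real (q k))"
proof -
  have "(\<Prod>k\<in>T. 1/real (q k) + 1) = (\<Sum>X\<in>Pow T. (\<Prod>k\<in>X. 1/real (q k)) * (\<Prod>k\<in>T-X. 1))"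
    by (rule prod_add[OF fin])
  then show ?thesis by (simp add: add.commute prod_dividef)
qed

theorem lemma4p2:
  fixes n :: nat and q :: "nat \<Rightarrow> nat"
  assumes "n \<ge> 3"
    and "\<forall>k\<in>{1..n}. q k \<ge> 2"
    and "(\<Prod>k=1..n. 1 + 1 / real (q k)) \<ge> real n * ln (real n)"
  shows "\<exists>H. (\<forall>A\<in>H. is_hyperplane_factors n q A \<and> fixed_coords n A \<noteq> {})
           \<and> (\<forall>A\<in>H. \<forall>B\<in>H. A \<noteq> B \<longrightarrow> fixed_coords n A \<noteq> fixed_coords n B)
           \<and> grid n q \<subseteq> (\<Union>A\<in>H. hyperplane_set n A)"
proof -
  obtain T where Tn: "T \<subseteq> {1..n}"
    and ineq: "(\<Sum>k\<in>T. ln (real (q k))) < (\<Prod>k\<in>T. 1 + 1/real (q k)) - 1"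
    using numeric[OF assms(1) assms(2) assms(3)] by blast
  have finT: "finite T" using Tn finite_subset by blast
  have q1: "\<forall>k\<in>T. q k \<ge> 1" using Tn assms(2) by force
  define F where "F = Pow T - {{}}"
  have finF: "finite F" unfolding F_def using finT by simp
  have FT: "F \<subseteq> Pow T" unfolding F_def by auto
  define G where "G = PiE T (\<lambda>k. {1..q k})"
  obtain a where a: "\<forall>S\<in>F. a S \<in> PiE S (\<lambda>k. {1..q k})"
    and bnd: "real (card {x\<in>G. \<forall>S\<in>F. \<not>(\<forall>k\<in>S. x k = a S k)})
       \<le> real (card G) * (\<Prod>S\<in>F. 1 - 1/real (\<Prod>k\<in>S. q k))"
    using greedy[OF finT q1 finF FT] unfolding G_def by blast
  define U where "U = {x\<in>G. \<forall>S\<in>F. \<not>(\<forall>k\<in>S. x k = a S k)}"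
  have cardG: "real (card G) = exp (\<Sum>k\<in>T. ln (real (q k)))"
  proof -
    have "real (card G) = (\<Prod>k\<in>T. real (q k))" unfolding G_def using finT
      by (simp add: card_PiE)
    also have "\<dots> = (\<Prod>k\<in>T. exp (ln (real (q k))))"
      using q1 by (intro prod.cong) auto
    also have "\<dots> = exp (\<Sum>k\<in>T. ln (real (q k)))" by (rule exp_sum[OF finT, symmetric])
    finally show ?thesis .
  qed
  have qSge: "real (\<Prod>k\<in>S. q k) \<ge> 1" if "S \<in> F" for S
  proof -
    have "(\<Prod>k\<in>S. q k) \<ge> 1" using q1 that unfolding F_def by (intro prod_ge_1) auto
    then show ?thesis by (metis of_nat_1 of_nat_le_iff)
  qed
  have prodF: "(\<Prod>S\<in>F. 1 - 1/real (\<Prod>k\<in>S. q k)) \<le> exp (- (\<Sum>S\<in>F. 1/real (\<Prod>k\<in>S. q k)))"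
  proof -
    have "(\<Prod>S\<in>F. 1 - 1/real (\<Prod>k\<in>S. q k)) \<le> (\<Prod>S\<in>F. exp (- (1/real (\<Prod>k\<in>S. q k))))"
    proof (intro prod_mono conjI)
      fix S assume "S \<in> F"
      from qSge[OF this] show "0 \<le> 1 - 1/real (\<Prod>k\<in>S. q k)" by (simp add: field_simps)
      show "1 - 1/real (\<Prod>k\<in>S. q k) \<le> exp (- (1/real (\<Prod>k\<in>S. q k)))"
        using exp_ge_add_one_self[of "- (1/real (\<Prod>k\<in>S. q k))"] by simp
    qed
    also have "\<dots> = exp (\<Sum>S\<in>F. - (1/real (\<Prod>k\<in>S. q k)))"
      by (rule exp_sum[OF finF, symmetric])
    also have "\<dots> = exp (- (\<Sum>S\<in>F. 1/real (\<Prod>k\<in>S. q k)))"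
      by (simp only: sum_negf)
    finally show ?thesis .
  qed
  have sumF: "(\<Sum>S\<in>F. 1/real (\<Prod>k\<in>S. q k)) = (\<Prod>k\<in>T. 1 + 1/real (q k)) - 1"
  proof -
    have "(\<Sum>S\<in>F. 1/real (\<Prod>k\<in>S. q k)) = (\<Sum>S\<in>Pow T. 1/real (\<Prod>k\<in>S. q k)) - 1/real (\<Prod>k\<in>{}. q k)"
      unfolding F_def using finT by (subst sum_diff1) auto
    then show ?thesis using powset_sum[OF finT, of q] by simp
  qed
  have "real (card U) \<le> exp (\<Sum>k\<in>T. ln (real (q k))) * exp (- ((\<Prod>k\<in>T. 1 + 1/real (q k)) - 1))"
    using bnd prodF sumF cardG unfolding U_def
    by (smt (verit) exp_gt_zero mult_left_mono)
  also have "\<dots> = exp ((\<Sum>k\<in>T. ln (real (q k))) - ((\<Prod>k\<in>T. 1 + 1/real (q k)) - 1))"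
    by (simp add: exp_add[symmetric])
  also have "\<dots> < 1" using ineq by simp
  finally have "card U = 0" by simp
  moreover have "finite U" unfolding U_def G_def using finT by (simp add: finite_PiE)
  ultimately have Uempty: "U = {}" by simp
  define Af where "Af S = restrict (\<lambda>k. if k \<in> S then {a S k} else {1..q k}) {1..n}" for S
  define H where "H = Af ` F"
  have fc: "fixed_coords n (Af S) = S" if "S \<in> F" for S
  proof -
    have "S \<subseteq> {1..n}" using that Tn unfolding F_def by auto
    moreover have "\<not> (\<exists>s. {1..q k} = {s})" if "k \<in> {1..n}" for k
    proof
      assume "\<exists>s. {1..q k} = {s}"
      then obtain s where s: "{1..q k} = {s}" by blast
      have "q k \<ge> 2" using assms(2) that by blast
      then have "1 \<in> {1..q k}" "2 \<in> {1..q k}" by auto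
      then show False using s by auto
    qed
    ultimately show ?thesis unfolding fixed_coords_def Af_def by auto
  qed
  have hyp: "is_hyperplane_factors n q (Af S)" if "S \<in> F" for S
  proof -
    have "\<forall>k\<in>S. a S k \<in> {1..q k}" using a that by (auto simp: PiE_iff)
    then show ?thesis unfolding is_hyperplane_factors_def Af_def by auto
  qed
  have P1: "\<forall>A\<in>H. is_hyperplane_factors n q A \<and> fixed_coords n A \<noteq> {}"
    unfolding H_def using hyp fc unfolding F_def by auto
  have P2: "\<forall>A\<in>H. \<forall>B\<in>H. A \<noteq> B \<longrightarrow> fixed_coords n A \<noteq> fixed_coords n B"
    unfolding H_def using fc by auto
  have P3: "grid n q \<subseteq> (\<Union>A\<in>H. hyperplane_set n A)"
  proof
    fix x assume x: "x \<in> grid n q"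
    then have xr: "restrict x T \<in> G" unfolding G_def grid_def using Tn by (auto simp: PiE_iff)
    then obtain S where S: "S \<in> F" "\<forall>k\<in>S. restrict x T k = a S k"
      using Uempty unfolding U_def by blast
    have ST: "S \<subseteq> T" using S(1) unfolding F_def by auto
    have xS: "\<forall>k\<in>S. x k = a S k"
    proof
      fix k assume k: "k \<in> S"
      then have kT: "k \<in> T" using ST by blast
      have "restrict x T k = a S k" using S(2) k by blast
      then show "x k = a S k" using kT by simp
    qed
    have "x \<in> hyperplane_set n (Af S)"
      unfolding hyperplane_set_def Af_def using x xS unfolding grid_def
      by (auto simp: PiE_iff)
    then show "x \<in> (\<Union>A\<in>H. hyperplane_set n A)" unfolding H_def using S(1) by auto
  qed
  show ?thesis using P1 P2 P3 by blast
qed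


end
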